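(* Let $G$ and $H$ be two nontrivial connected graphs. Then $hn_{cc}(G\boxtimes H)=2$.
   Context: All graphs are finite, simple and undirected. For a graph $G$ and $S\subseteq V(G)$, the cycle interval $\langle S\rangle$ consists of the vertices of $S$ together with every vertex $w\in V(G)\setminus S$ such that the induced subgraph $G[S\cup\{w\}]$ contains a cycle through $w$. $S$ is cycle convex if $\langle S\rangle=S$. The cycle convex hull $\langle S\rangle_C$ is the smallest cycle convex set containing $S$. A set $S$ is a (cycle) hull set if $\langle S\rangle_C=V(G)$, and the cycle hull number $hn_{cc}(G)$ is the minimum cardinality of a hull set. The strong product $G\boxtimes H$ has vertex set $V(G)\times V(H)$, with $(g_1,h_1)\sim(g_2,h_2)$ iff ($g_1\sim g_2$ and $h_1=h_2$) or ($g_1=g_2$ and $h_1\sim h_2$) or ($g_1\sim g_2$ and $h_1\sim h_2$). A graph is nontrivial if it has at least two vertices. *)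

theory Defs
  imports Main
begin

definition graph :: "'a set \<Rightarrow> ('a \<Rightarrow> 'a \<Rightarrow> bool) \<Rightarrow> bool" where
  "graph V E \<longleftrightarrow> finite V \<and> (\<forall>x y. E x y \<longrightarrow> E y x) \<and> (\<forall>x. \<not> E x x)
     \<and> (\<forall>x y. E x y \<longrightarrow> x \<in> V \<and> y \<in> V)"

definition is_walk :: "('a \<Rightarrow> 'a \<Rightarrow> bool) \<Rightarrow> 'a list \<Rightarrow> bool" where
  "is_walk E p \<longleftrightarrow> p \<noteq> [] \<and> (\<forall>i. Suc i < length p \<longrightarrow> E (p ! i) (p ! Suc i))"

definition connected_graph :: "'a set \<Rightarrow> ('a \<Rightarrow> 'a \<Rightarrow> bool) \<Rightarrow> bool" where
  "connected_graph V E \<longleftrightarrow> V \<noteq> {} \<and>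
     (\<forall>x\<in>V. \<forall>y\<in>V. \<exists>p. is_walk E p \<and> hd p = x \<and> last p = y)"

definition is_cycle :: "('a \<Rightarrow> 'a \<Rightarrow> bool) \<Rightarrow> 'a list \<Rightarrow> bool" where
  "is_cycle E c \<longleftrightarrow> length c \<ge> 3 \<and> distinct c \<and> is_walk E c \<and> E (last c) (hd c)"

definition cycle_through_in :: "('a \<Rightarrow> 'a \<Rightarrow> bool) \<Rightarrow> 'a set \<Rightarrow> 'a \<Rightarrow> bool" where
  "cycle_through_in E T w \<longleftrightarrow> (\<exists>c. is_cycle E c \<and> set c \<subseteq> T \<and> w \<in> set c)"

definition cycle_interval :: "'a set \<Rightarrow> ('a \<Rightarrow> 'a \<Rightarrow> bool) \<Rightarrow> 'a set \<Rightarrow> 'a set" where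
  "cycle_interval V E S = S \<union> {w \<in> V - S. cycle_through_in E (S \<union> {w}) w}"

definition cycle_convex :: "'a set \<Rightarrow> ('a \<Rightarrow> 'a \<Rightarrow> bool) \<Rightarrow> 'a set \<Rightarrow> bool" where
  "cycle_convex V E S \<longleftrightarrow> cycle_interval V E S = S"

definition cycle_hull :: "'a set \<Rightarrow> ('a \<Rightarrow> 'a \<Rightarrow> bool) \<Rightarrow> 'a set \<Rightarrow> 'a set" where
  "cycle_hull V E S = \<Inter> {T. T \<subseteq> V \<and> S \<subseteq> T \<and> cycle_convex V E T}"

definition hull_set :: "'a set \<Rightarrow> ('a \<Rightarrow> 'a \<Rightarrow> bool) \<Rightarrow> 'a set \<Rightarrow> bool" where
  "hull_set V E S \<longleftrightarrow> S \<subseteq> V \<and> cycle_hull V E S = V"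

definition cycle_hull_number :: "'a set \<Rightarrow> ('a \<Rightarrow> 'a \<Rightarrow> bool) \<Rightarrow> nat" where
  "cycle_hull_number V E = (LEAST k. \<exists>S. hull_set V E S \<and> card S = k)"

definition strong_prod_V :: "'a set \<Rightarrow> 'b set \<Rightarrow> ('a \<times> 'b) set" where
  "strong_prod_V VG VH = VG \<times> VH"

definition strong_prod_E :: "('a \<Rightarrow> 'a \<Rightarrow> bool) \<Rightarrow> ('b \<Rightarrow> 'b \<Rightarrow> bool)
    \<Rightarrow> ('a \<times> 'b) \<Rightarrow> ('a \<times> 'b) \<Rightarrow> bool" where
  "strong_prod_E EG EH = (\<lambda>(g1, h1) (g2, h2).
      (EG g1 g2 \<and> h1 = h2) \<or> (g1 = g2 \<and> EH h1 h2) \<or> (EG g1 g2 \<and> EH h1 h2))"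

end

theory Submission
  imports Defs
begin

lemma walk_cons: "is_walk E (a # b # q) \<Longrightarrow> E a b \<and> is_walk E (b # q)"
  unfolding is_walk_def
proof (intro conjI allI impI)
  assume h: "a # b # q \<noteq> [] \<and> (\<forall>i. Suc i < length (a # b # q) \<longrightarrow> E ((a # b # q) ! i) ((a # b # q) ! Suc i))"
  show "E a b" using h[THEN conjunct2, rule_format, of 0] by simp
  show "b # q \<noteq> []" by simp
  fix i assume "Suc i < length (b # q)"
  then show "E ((b # q) ! i) ((b # q) ! Suc i)" using h[THEN conjunct2, rule_format, of "Suc i"] by simp
qed

lemma walk_closed:
  assumes "is_walk E p" "hd p \<in> X" "\<And>x y. x \<in> X \<Longrightarrow> E x y \<Longrightarrow> y \<in> X"
  shows "last p \<in> X"
  using assms(1,2)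
proof (induction p)
  case Nil then show ?case by (simp add: is_walk_def)
next
  case (Cons a q)
  show ?case
  proof (cases q)
    case Nil then show ?thesis using Cons by simp
  next
    case (Cons b r)
    have "E a b \<and> is_walk E q" using walk_cons[of E a b r] Cons.prems \<open>q = b # r\<close> by simp
    then have "E a b" "is_walk E q" by auto
    then have "hd q \<in> X" using assms(3) Cons.prems \<open>q = b # r\<close> by auto
    then show ?thesis using Cons.IH \<open>is_walk E q\<close> \<open>q = b # r\<close> by simp
  qed
qed

lemma conn_closed:
  assumes "connected_graph V E" "x0 \<in> V" "x0 \<in> X" "\<And>x y. x \<in> X \<Longrightarrow> E x y \<Longrightarrow> y \<in> X"
  shows "V \<subseteq> X"
proof
  fix y assume "y \<in> V"
  then obtain p where "is_walk E p" "hd p = x0" "last p = y"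
    using assms(1,2) unfolding connected_graph_def by blast
  then show "y \<in> X" using walk_closed[of E p X, OF _ _ assms(4)] assms(3) by simp
qed

lemma has_nb:
  assumes "graph V E" "connected_graph V E" "card V \<ge> 2" "x \<in> V"
  shows "\<exists>y. E x y \<and> y \<in> V"
proof -
  have "\<not> V \<subseteq> {x}"
  proof
    assume "V \<subseteq> {x}"
    then have "card V \<le> card {x}" by (rule card_mono[rotated]) simp
    moreover have "card {x} = 1" by (rule is_singleton_altdef[THEN iffD1]) simp
    ultimately show False using assms(3) by linarith
  qed
  then obtain y where y: "y \<in> V" "y \<noteq> x" by blast
  then obtain p where p: "is_walk E p" "hd p = x" "last p = y"
    using assms(2,4) unfolding connected_graph_def by blast
  have "p \<noteq> []" using p(1) by (simp add: is_walk_def)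
  then obtain q where pq: "p = x # q" using p(2) by (cases p) auto
  have "q \<noteq> []" using pq p(3) y(2) by auto
  then obtain b r where "q = b # r" by (cases q) auto
  then have "p = x # b # r" using pq by simp
  then have "E x b" using walk_cons[of E x b r] p(1) by simp
  then show ?thesis using assms(1) unfolding graph_def by blast
qed

lemma tri:
  assumes "cycle_convex V E T" "x \<in> V" "E x a" "E a b" "E b x" "a \<in> T" "b \<in> T"
    "\<forall>z. \<not> E z z" "\<forall>u v. E u v \<longrightarrow> E v u"
  shows "x \<in> T"
proof (rule ccontr)
  assume nx: "x \<notin> T"
  have d: "x \<noteq> a" "a \<noteq> b" "b \<noteq> x" using assms(3,4,5,8) by auto
  have w: "is_walk E [x, a, b]" unfolding is_walk_def
  proof (intro conjI allI impI)
    fix i assume "Suc i < length [x, a, b]"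
    then have "i = 0 \<or> i = 1" by auto
    then show "E ([x, a, b] ! i) ([x, a, b] ! Suc i)" using assms(3,4) by auto
  qed simp
  have "is_cycle E [x, a, b]" unfolding is_cycle_def using w d assms(5) by auto
  then have "cycle_through_in E (T \<union> {x}) x"
    unfolding cycle_through_in_def using assms(6,7) by (intro exI[of _ "[x,a,b]"]) auto
  then have "x \<in> cycle_interval V E T" unfolding cycle_interval_def using nx assms(2) by auto
  then show False using assms(1) nx unfolding cycle_convex_def by simp
qed

lemma small_convex:
  assumes "finite S" "card S \<le> 1"
  shows "cycle_convex V E S"
proof -
  have "\<not> cycle_through_in E (S \<union> {w}) w" for w
  proof
    assume "cycle_through_in E (S \<union> {w}) w"
    then obtain c where c: "is_cycle E c" "set c \<subseteq> S \<union> {w}" unfolding cycle_through_in_def by blast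
    have "card (set c) = length c" using c(1) distinct_card unfolding is_cycle_def by blast
    then have "card (set c) \<ge> 3" using c(1) unfolding is_cycle_def by simp
    moreover have "card (set c) \<le> card (S \<union> {w})" using c(2) assms(1) by (simp add: card_mono)
    moreover have "card (S \<union> {w}) \<le> 2" using assms by (simp add: card_insert_if)
    ultimately show False by simp
  qed
  then show ?thesis unfolding cycle_convex_def cycle_interval_def by auto
qed

theorem mainTheorem1:
  fixes VG :: "'a set" and EG :: "'a \<Rightarrow> 'a \<Rightarrow> bool"
    and VH :: "'b set" and EH :: "'b \<Rightarrow> 'b \<Rightarrow> bool"
  assumes "graph VG EG" and "graph VH EH"
    and "connected_graph VG EG" and "connected_graph VH EH"
    and "card VG \<ge> 2" and "card VH \<ge> 2"
  shows "cycle_hull_number (strong_prod_V VG VH) (strong_prod_E EG EH) = 2"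
proof -
  define V where "V = strong_prod_V VG VH"
  define E where "E = strong_prod_E EG EH"
  have Ep: "E (g, h) (g', h') \<longleftrightarrow> (EG g g' \<and> h = h') \<or> (g = g' \<and> EH h h') \<or> (EG g g' \<and> EH h h')"
    for g h g' h' unfolding E_def strong_prod_E_def by simp
  have sG: "EG x y \<Longrightarrow> EG y x" "\<not> EG x x" "EG x y \<Longrightarrow> x \<in> VG \<and> y \<in> VG" for x y
    using assms(1) unfolding graph_def by blast+
  have sH: "EH x y \<Longrightarrow> EH y x" "\<not> EH x x" "EH x y \<Longrightarrow> x \<in> VH \<and> y \<in> VH" for x y
    using assms(2) unfolding graph_def by blast+
  have irr: "\<forall>z. \<not> E z z" using sG(2) sH(2) Ep by auto
  have sym: "\<forall>u v. E u v \<longrightarrow> E v u" using sG(1) sH(1) Ep by auto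
  have finV: "finite V" using assms(1,2) unfolding V_def strong_prod_V_def graph_def by simp
  have cardV: "card V \<ge> 4" unfolding V_def strong_prod_V_def card_cartesian_product
  proof -
    have "2 * 2 \<le> card VG * card VH" using assms(5,6) by (rule mult_le_mono)
    then show "4 \<le> card VG * card VH" by simp
  qed
  obtain g1 where g1: "g1 \<in> VG" using assms(3) unfolding connected_graph_def by blast
  obtain g2 where g2: "EG g1 g2" using has_nb[OF assms(1,3,5) g1] by blast
  obtain h1 where h1: "h1 \<in> VH" using assms(4) unfolding connected_graph_def by blast
  obtain h2 where h2: "EH h1 h2" using has_nb[OF assms(2,4,6) h1] by blast
  define S where "S = {(g1, h1), (g2, h2)}"
  have SV: "S \<subseteq> V" using g2 h2 sG sH unfolding S_def V_def strong_prod_V_def by auto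
  have "g1 \<noteq> g2" using g2 sG(2) by blast
  then have cardS: "card S = 2" unfolding S_def by simp
  have key: "V \<subseteq> T" if T: "T \<subseteq> V" "S \<subseteq> T" "cycle_convex V E T" for T
  proof -
    have tri': "x \<in> T" if "x \<in> V" "E x a" "E a b" "E b x" "a \<in> T" "b \<in> T" for x a b
      using tri[OF T(3) that irr sym] .
    have "(g1, h2) \<in> T"
    proof (rule tri')
      show "(g1, h2) \<in> V" using g1 sH(3)[OF h2] unfolding V_def strong_prod_V_def by simp
      show "E (g1, h2) (g1, h1)" using sH(1)[OF h2] by (simp add: Ep)
      show "E (g1, h1) (g2, h2)" using g2 h2 by (simp add: Ep)
      show "E (g2, h2) (g1, h2)" using sG(1)[OF g2] by (simp add: Ep)
      show "(g1, h1) \<in> T" "(g2, h2) \<in> T" using T(2) unfolding S_def by auto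
    qed
    define A where "A = {g. (g, h1) \<in> T \<and> (g, h2) \<in> T}"
    have "VG \<subseteq> A"
    proof (rule conn_closed[OF assms(3) g1])
      show "g1 \<in> A" using \<open>(g1, h2) \<in> T\<close> T(2) unfolding A_def S_def by auto
      fix g g' assume "g \<in> A" "EG g g'"
      then have a: "(g, h1) \<in> T" "(g, h2) \<in> T" unfolding A_def by auto
      have "(g', h1) \<in> T"
      proof (rule tri')
        show "(g', h1) \<in> V" using h1 sG(3)[OF \<open>EG g g'\<close>] unfolding V_def strong_prod_V_def by simp
        show "E (g', h1) (g, h1)" using sG(1)[OF \<open>EG g g'\<close>] by (simp add: Ep)
        show "E (g, h1) (g, h2)" using h2 by (simp add: Ep)
        show "E (g, h2) (g', h1)" using \<open>EG g g'\<close> sH(1)[OF h2] by (simp add: Ep)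
      qed (use a in auto)
      moreover have "(g', h2) \<in> T"
      proof (rule tri')
        show "(g', h2) \<in> V" using sH(3)[OF h2] sG(3)[OF \<open>EG g g'\<close>] unfolding V_def strong_prod_V_def by simp
        show "E (g', h2) (g, h2)" using sG(1)[OF \<open>EG g g'\<close>] by (simp add: Ep)
        show "E (g, h2) (g, h1)" using sH(1)[OF h2] by (simp add: Ep)
        show "E (g, h1) (g', h2)" using \<open>EG g g'\<close> h2 by (simp add: Ep)
      qed (use a in auto)
      ultimately show "g' \<in> A" unfolding A_def by auto
    qed
    define C where "C = {h. \<forall>g\<in>VG. (g, h) \<in> T}"
    have "VH \<subseteq> C"
    proof (rule conn_closed[OF assms(4) h1])
      show "h1 \<in> C" using \<open>VG \<subseteq> A\<close> unfolding A_def C_def by auto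
      fix h h' assume hC: "h \<in> C" "EH h h'"
      show "h' \<in> C" unfolding C_def
      proof (intro CollectI ballI)
        fix g assume g: "g \<in> VG"
        obtain g' where g': "EG g g'" "g' \<in> VG" using has_nb[OF assms(1,3,5) g] by blast
        show "(g, h') \<in> T"
        proof (rule tri')
          show "(g, h') \<in> V" using g sH(3)[OF hC(2)] unfolding V_def strong_prod_V_def by simp
          show "E (g, h') (g, h)" using sH(1)[OF hC(2)] by (simp add: Ep)
          show "E (g, h) (g', h)" using g'(1) by (simp add: Ep)
          show "E (g', h) (g, h')" using sG(1)[OF g'(1)] hC(2) by (simp add: Ep)
          show "(g, h) \<in> T" "(g', h) \<in> T" using hC(1) g g'(2) unfolding C_def by auto
        qed
      qed
    qed
    then show ?thesis unfolding V_def strong_prod_V_def C_def by auto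
  qed
  have convV: "cycle_convex V E V" unfolding cycle_convex_def cycle_interval_def by auto
  have hull: "hull_set V E S"
    unfolding hull_set_def cycle_hull_def using SV key convV by blast
  have lower: "2 \<le> k" if "hull_set V E S'" "card S' = k" for S' k
  proof (rule ccontr)
    assume "\<not> 2 \<le> k"
    then have c1: "card S' \<le> 1" using that by simp
    have S'V: "S' \<subseteq> V" using that unfolding hull_set_def by simp
    then have fS: "finite S'" using finV finite_subset by blast
    have "cycle_hull V E S' \<subseteq> S'"
      unfolding cycle_hull_def using small_convex[OF fS c1] S'V by blast
    then have "V \<subseteq> S'" using that unfolding hull_set_def by simp
    then have "card V \<le> card S'" using fS card_mono by blast
    then show False using c1 cardV by simp
  qed
  show ?thesis
    unfolding V_def[symmetric] E_def[symmetric] cycle_hull_number_def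
  proof (rule Least_equality)
    show "\<exists>S. hull_set V E S \<and> card S = 2" using hull cardS by blast
  next
    fix y assume "\<exists>S. hull_set V E S \<and> card S = y"
    then obtain S' where "hull_set V E S'" "card S' = y" by blast
    then show "2 \<le> y" by (rule lower)
  qed
qed

end
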